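(* (a) For the complete graph $K_n$ with $n\ge 2$, $\gamma(K_n)=\dfrac{n}{n-1}$. (b) For the cycle $C_n$ with $n\ge 3$, $\gamma(C_n)=\dfrac{n}{\lfloor n/2\rfloor\,\lceil n/2\rceil}$.
   Context: For a finite simple undirected graph $G$ with $n$ vertices, let $\mathcal{F}=\{x\in\mathbb{R}^{V(G)} : \sum_{v} x_v = 0,\ \|x\|_\infty = 1\}$, for $x\in\mathcal{F}$ let $\gamma_x(G)=\max_{uv\in E(G)}|x_u-x_v|$, and $\gamma(G)=\min_{x\in\mathcal{F}}\gamma_x(G)$. *)

theory Defs
  imports Complex_Main
begin

text \<open>A finite simple graph is given by a finite vertex set V and a symmetric,
irreflexive edge relation E (only its restriction to V matters).\<close>

definition sup_norm :: "'a set \<Rightarrow> ('a \<Rightarrow> real) \<Rightarrow> real" where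
  "sup_norm V x = Max ((\<lambda>v. \<bar>x v\<bar>) ` V)"

definition feasible :: "'a set \<Rightarrow> ('a \<Rightarrow> real) set" where
  "feasible V = {x. (\<Sum>v\<in>V. x v) = 0 \<and> sup_norm V x = 1}"

definition gamma_x :: "'a set \<Rightarrow> ('a \<Rightarrow> 'a \<Rightarrow> bool) \<Rightarrow> ('a \<Rightarrow> real) \<Rightarrow> real" where
  "gamma_x V E x = Max {\<bar>x u - x v\<bar> | u v. u \<in> V \<and> v \<in> V \<and> E u v}"

definition gamma :: "'a set \<Rightarrow> ('a \<Rightarrow> 'a \<Rightarrow> bool) \<Rightarrow> real" where
  "gamma V E = Inf (gamma_x V E ` feasible V)"

definition complete_edge :: "nat \<Rightarrow> nat \<Rightarrow> bool" where
  "complete_edge u v \<longleftrightarrow> u \<noteq> v"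

definition cycle_edge :: "nat \<Rightarrow> nat \<Rightarrow> nat \<Rightarrow> bool" where
  "cycle_edge n u v \<longleftrightarrow> v = (u + 1) mod n \<or> u = (v + 1) mod n"

end

theory Submission
  imports Defs
begin

lemma gamma_eqI:
  assumes "x0 \<in> feasible V" "gamma_x V E x0 = c" "\<And>x. x \<in> feasible V \<Longrightarrow> c \<le> gamma_x V E x"
  shows "gamma V E = c"
  unfolding gamma_def
  by (rule cInf_eq_minimum) (use assms in \<open>force+\<close>)

lemma edge_set_eq:
  "{\<bar>x u - x v\<bar> | u v. u \<in> V \<and> v \<in> V \<and> E u v} = (\<lambda>(u,v). \<bar>x u - x v\<bar>) ` {p \<in> V \<times> V. E (fst p) (snd p)}"
  by force

lemma edge_set_finite:
  assumes "finite V"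
  shows "finite {\<bar>x u - x v\<bar> | u v. u \<in> V \<and> v \<in> V \<and> E u v}"
  unfolding edge_set_eq using assms by auto

lemma gamma_x_ge:
  assumes "finite V" "u \<in> V" "v \<in> V" "E u v"
  shows "\<bar>x u - x v\<bar> \<le> gamma_x V E x"
  unfolding gamma_x_def
  by (rule Max_ge[OF edge_set_finite[OF assms(1)]]) (use assms in blast)

lemma gamma_x_eqI:
  assumes "finite V" "u \<in> V" "v \<in> V" "E u v" "\<bar>x u - x v\<bar> = c"
    "\<And>a b. a \<in> V \<Longrightarrow> b \<in> V \<Longrightarrow> E a b \<Longrightarrow> \<bar>x a - x b\<bar> \<le> c"
  shows "gamma_x V E x = c"
  unfolding gamma_x_def
  by (rule Max_eqI[OF edge_set_finite[OF assms(1)]]) (use assms in blast)+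

lemma sup_norm_eqI:
  assumes "finite V" "w \<in> V" "\<bar>x w\<bar> = 1" "\<And>v. v \<in> V \<Longrightarrow> \<bar>x v\<bar> \<le> 1"
  shows "sup_norm V x = 1"
  unfolding sup_norm_def
  by (rule Max_eqI) (use assms in auto)

lemma sup_normD:
  assumes "finite V" "V \<noteq> {}" "sup_norm V x = 1"
  shows "\<exists>w\<in>V. \<bar>x w\<bar> = 1"
proof -
  have "Max ((\<lambda>v. \<bar>x v\<bar>) ` V) \<in> (\<lambda>v. \<bar>x v\<bar>) ` V"
    using assms by (intro Max_in) auto
  then show ?thesis using assms(3) unfolding sup_norm_def by auto
qed

lemma normalize:
  assumes "finite V" "V \<noteq> {}" "x \<in> feasible V"
  shows "\<exists>w\<in>V. \<exists>y. y w = 1 \<and> sum y V = 0 \<and> (\<forall>u v. \<bar>y u - y v\<bar> = \<bar>x u - x v\<bar>)"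
proof -
  from assms(3) have s: "sum x V = 0" and n: "sup_norm V x = 1" unfolding feasible_def by auto
  obtain w where w: "w \<in> V" "\<bar>x w\<bar> = 1" using sup_normD[OF assms(1,2) n] by blast
  define y where "y = (\<lambda>v. x w * x v)"
  have "y w = 1" using w by (simp add: y_def abs_if split: if_splits)
  moreover have "sum y V = 0" unfolding y_def by (simp add: sum_distrib_left[symmetric] s)
  moreover have "\<forall>u v. \<bar>y u - y v\<bar> = \<bar>x u - x v\<bar>"
    using w by (simp add: y_def right_diff_distrib[symmetric] abs_mult)
  ultimately show ?thesis using w by blast
qed

lemma sum_bound:
  fixes y :: "'a \<Rightarrow> real"
  assumes "finite V" "sum y V = 0" "\<And>u. u \<in> V \<Longrightarrow> 1 - d u * g \<le> y u"
  shows "real (card V) \<le> g * (\<Sum>u\<in>V. d u)"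
proof -
  have "(\<Sum>u\<in>V. 1 - d u * g) \<le> sum y V" by (rule sum_mono) (use assms in auto)
  then show ?thesis using assms(2) by (simp add: sum_subtractf sum_distrib_left sum_distrib_right mult.commute)
qed


lemma complete_part:
  assumes "n \<ge> 2"
  shows "gamma {0..<n} complete_edge = real n / (real n - 1)"
proof -
  define V where "V = {0..<n}"
  have fin: "finite V" and ne: "V \<noteq> {}" using assms by (auto simp: V_def)
  have n1: "real n - 1 > 0" using assms by simp
  define x0 :: "nat \<Rightarrow> real" where "x0 = (\<lambda>v. if v = 0 then 1 else - 1 / (real n - 1))"
  have V0: "0 \<in> V" "1 \<in> V" using assms by (auto simp: V_def)
  have "sum x0 V = x0 0 + sum x0 (V - {0})"
    using fin V0 by (simp add: sum.remove)
  also have "sum x0 (V - {0}) = (\<Sum>v\<in>V - {0}. - 1 / (real n - 1))"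
    by (rule sum.cong) (auto simp: x0_def)
  also have "\<dots> = - 1" using fin V0 n1 by (simp add: V_def)
  finally have s0: "sum x0 V = 0" by (simp add: x0_def)
  have bnd: "\<bar>x0 v\<bar> \<le> 1" for v
    using n1 assms by (auto simp: x0_def field_simps)
  have "sup_norm V x0 = 1"
    by (rule sup_norm_eqI[OF fin V0(1)]) (use bnd in \<open>auto simp: x0_def\<close>)
  with s0 have feas: "x0 \<in> feasible V" by (simp add: feasible_def)
  have eq: "1 + 1 / (real n - 1) = real n / (real n - 1)" using n1 by (simp add: field_simps)
  have g0: "gamma_x V complete_edge x0 = real n / (real n - 1)"
  proof (rule gamma_x_eqI[OF fin V0(1) V0(2)])
    show "complete_edge 0 1" by (simp add: complete_edge_def)
    show "\<bar>x0 0 - x0 1\<bar> = real n / (real n - 1)" using n1 eq by (simp add: x0_def)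
    fix a b assume "a \<in> V" "b \<in> V" "complete_edge a b"
    then show "\<bar>x0 a - x0 b\<bar> \<le> real n / (real n - 1)"
    proof -
      have p: "1 / (real n - 1) > 0" using n1 by simp
      define q where "q = 1 / (real n - 1)"
      have q: "q > 0" "1 + q = real n / (real n - 1)" using p eq by (auto simp: q_def)
      have "x0 a - x0 b = 0 \<or> x0 a - x0 b = 1 + q \<or> x0 a - x0 b = - (1 + q)"
        by (auto simp: x0_def q_def)
      then show ?thesis unfolding q(2)[symmetric] using q(1) by (elim disjE) simp_all
    qed
  qed
  have lb: "real n / (real n - 1) \<le> gamma_x V complete_edge x" if x: "x \<in> feasible V" for x
  proof -
    obtain w y where w: "w \<in> V" "y w = 1" "sum y V = 0" and yx: "\<forall>u v. \<bar>y u - y v\<bar> = \<bar>x u - x v\<bar>"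
      using normalize[OF fin ne x] by blast
    define g where "g = gamma_x V complete_edge x"
    define d :: "nat \<Rightarrow> real" where "d = (\<lambda>u. if u = w then 0 else 1)"
    have "1 - d u * g \<le> y u" if u: "u \<in> V" for u
    proof (cases "u = w")
      case True then show ?thesis using w by (simp add: d_def)
    next
      case False
      have "\<bar>x w - x u\<bar> \<le> g" unfolding g_def
        by (rule gamma_x_ge[OF fin w(1) u]) (use False in \<open>simp add: complete_edge_def\<close>)
      then have "\<bar>y w - y u\<bar> \<le> g" using yx by simp
      then show ?thesis using False w by (simp add: d_def)
    qed
    from sum_bound[OF fin w(3) this] have "real n \<le> g * (\<Sum>u\<in>V. d u)" by (simp add: V_def)
    also have "(\<Sum>u\<in>V. d u) = real n - 1"
    proof -
      have "(\<Sum>u\<in>V. d u) = d w + (\<Sum>u\<in>V - {w}. d u)" using fin w by (simp add: sum.remove)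
      also have "(\<Sum>u\<in>V - {w}. d u) = (\<Sum>u\<in>V - {w}. 1)" by (rule sum.cong) (auto simp: d_def)
      finally show ?thesis using fin w assms by (simp add: d_def V_def of_nat_diff)
    qed
    finally show ?thesis using n1 by (simp add: g_def field_simps)
  qed
  show ?thesis unfolding V_def[symmetric]
    by (rule gamma_eqI[OF feas g0 lb])
qed


lemma S_step: "(\<Sum>k<Suc (Suc n). min k (Suc (Suc n) - k)) = (\<Sum>k<n. min k (n - k)) + n + 1"
proof -
  have "(\<Sum>k<Suc (Suc n). min k (Suc (Suc n) - k)) = (\<Sum>k<Suc n. min (Suc k) (Suc n - k))"
    by (subst sum.lessThan_Suc_shift) simp
  also have "\<dots> = (\<Sum>k<Suc n. 1 + min k (n - k))"
    by (rule sum.cong) auto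
  also have "\<dots> = Suc n + (\<Sum>k<Suc n. min k (n - k))"
    by (simp only: sum.distrib) simp
  also have "(\<Sum>k<Suc n. min k (n - k)) = (\<Sum>k<n. min k (n - k))" by simp
  finally show ?thesis by simp
qed

lemma S_sum: "(\<Sum>k<(n::nat). min k (n - k)) = (n div 2) * ((n + 1) div 2)"
proof (induction n rule: less_induct)
  case (less n)
  show ?case
  proof (cases "n < 2")
    case True
    then have "n = 0 \<or> n = 1" by auto
    then show ?thesis by auto
  next
    case False
    then obtain m where m: "n = Suc (Suc m)" by (metis add_2_eq_Suc le_Suc_ex not_less)
    have "(\<Sum>k<n. min k (n - k)) = (m div 2) * ((m + 1) div 2) + m + 1"
      using S_step[of m] less[of m] m by simp
    also have "\<dots> = (n div 2) * ((n + 1) div 2)"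
    proof -
      have "m div 2 * ((m + 1) div 2) + m + 1 = (m div 2 + 1) * ((m+1) div 2 + 1)"
      proof (cases "even m")
        case True then obtain j where "m = 2*j" by blast
        then show ?thesis by simp
      next
        case False then obtain j where "m = 2*j+1" by (metis oddE)
        then show ?thesis by simp
      qed
      then show ?thesis using m by simp
    qed
    finally show ?thesis .
  qed
qed

lemma mod_back:
  fixes u w n :: nat
  assumes "u < n" "w < n"
  shows "(w + (u + n - w) mod n) mod n = u"
proof (cases "w \<le> u")
  case True
  have e: "u + n - w = (u - w) + n" using True by arith
  have "(u + n - w) mod n = u - w"
    unfolding e mod_add_self2 using assms(1) by (intro mod_less) arith
  moreover have "w + (u - w) = u" using True by arith
  ultimately show ?thesis using assms(1) by (simp del: add_diff_assoc)
next
  case False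
  have "(u + n - w) mod n = u + n - w" using assms False by (intro mod_less) arith
  moreover have "w + (u + n - w) = u + n" using False assms by arith
  ultimately show ?thesis using assms by simp
qed

lemma mod_fwd:
  fixes k w n :: nat
  assumes "k < n" "w < n"
  shows "((w + k) mod n + n - w) mod n = k"
proof (cases "w + k < n")
  case True then show ?thesis by simp
next
  case False
  then have "(w + k) mod n = w + k - n" using assms by (simp add: le_mod_geq)
  then show ?thesis using False assms by simp
qed

lemma reindex_sum:
  fixes f :: "nat \<Rightarrow> real"
  assumes "w < n"
  shows "(\<Sum>u\<in>{0..<n}. f ((u + n - w) mod n)) = (\<Sum>k<n. f k)"
proof -
  define h where "h = (\<lambda>k. (w + k) mod n)"
  have inj: "inj_on h {0..<n}"
  proof (rule inj_onI)
    fix a b assume "a \<in> {0..<n}" "b \<in> {0..<n}" "h a = h b"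
    then have "((w + a) mod n + n - w) mod n = ((w + b) mod n + n - w) mod n" unfolding h_def by simp
    then show "a = b" using mod_fwd[of a n w] mod_fwd[of b n w] assms \<open>a \<in> _\<close> \<open>b \<in> _\<close> by simp
  qed
  have img: "h ` {0..<n} = {0..<n}"
    by (rule endo_inj_surj) (use inj assms in \<open>auto simp: h_def\<close>)
  have "(\<Sum>u\<in>{0..<n}. f ((u + n - w) mod n)) = (\<Sum>u\<in>h ` {0..<n}. f ((u + n - w) mod n))"
    using img by simp
  also have "\<dots> = (\<Sum>k\<in>{0..<n}. f ((h k + n - w) mod n))"
    by (subst sum.reindex[OF inj]) simp
  also have "\<dots> = (\<Sum>k\<in>{0..<n}. f k)"
    by (rule sum.cong) (auto simp: h_def mod_fwd assms)
  finally show ?thesis by (simp add: atLeast0LessThan)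
qed

lemma cyc_dist_step1:
  fixes a b n :: nat
  assumes "a < n" "b = (a + 1) mod n"
  shows "min a (n - a) \<le> min b (n - b) + 1 \<and> min b (n - b) \<le> min a (n - a) + 1"
proof (cases "a + 1 < n")
  case True then show ?thesis using assms by auto
next
  case False
  then have "a + 1 = n" using assms by simp
  then have "b = 0" using assms by simp
  then show ?thesis using \<open>a + 1 = n\<close> by auto
qed

lemma cyc_dist_step:
  fixes a b n :: nat
  assumes "a < n" "b < n" "cycle_edge n a b"
  shows "\<bar>real (min a (n - a)) - real (min b (n - b))\<bar> \<le> 1"
proof -
  have "min a (n - a) \<le> min b (n - b) + 1 \<and> min b (n - b) \<le> min a (n - a) + 1"
    using assms cyc_dist_step1[of a n b] cyc_dist_step1[of b n a] unfolding cycle_edge_def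
    by auto
  then show ?thesis by linarith
qed


lemma cycle_part:
  assumes n3: "n \<ge> 3"
  shows "gamma {0..<n} (cycle_edge n) = real n / (real (n div 2) * real ((n + 1) div 2))"
proof -
  define V where "V = {0..<n}"
  define E where "E = cycle_edge n"
  define S :: nat where "S = (n div 2) * ((n + 1) div 2)"
  have fin: "finite V" and ne: "V \<noteq> {}" using n3 by (auto simp: V_def)
  have Spos: "S > 0" using n3 by (simp add: S_def)
  define c where "c = real n / real S"
  have cpos: "c > 0" using Spos n3 by (simp add: c_def)
  have target: "real n / (real (n div 2) * real ((n + 1) div 2)) = c"
    by (simp add: c_def S_def)
  have V01: "0 \<in> V" "1 \<in> V" using n3 by (auto simp: V_def)
  have E01: "E 0 1" using n3 by (simp add: E_def cycle_edge_def)
  define dd :: "nat \<Rightarrow> real" where "dd = (\<lambda>u. real (min u (n - u)))"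
  define x0 where "x0 = (\<lambda>u. 1 - dd u * c)"
  have sumdd: "(\<Sum>u\<in>V. dd u) = real S"
    using S_sum[of n] by (simp add: V_def dd_def S_def atLeast0LessThan flip: of_nat_sum)
  have s0: "sum x0 V = 0"
  proof -
    have "sum x0 V = real (card V) - (\<Sum>u\<in>V. dd u) * c"
      by (simp add: x0_def sum_subtractf sum_distrib_right)
    also have "\<dots> = 0" using sumdd Spos by (simp add: V_def c_def)
    finally show ?thesis .
  qed
  have bnd: "\<bar>x0 u\<bar> \<le> 1" for u
  proof -
    have m1: "min u (n - u) \<le> n div 2" by arith
    have m2: "n \<le> 2 * ((n + 1) div 2)" by arith
    have "min u (n - u) * n \<le> (n div 2) * (2 * ((n + 1) div 2))"
      by (rule mult_le_mono[OF m1 m2])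
    then have "min u (n - u) * n \<le> 2 * S" by (simp add: S_def)
    then have "dd u * real n \<le> 2 * real S" unfolding dd_def by (metis of_nat_le_iff of_nat_mult of_nat_numeral)
    then have "dd u * c \<le> 2" using Spos by (simp add: c_def field_simps)
    moreover have "dd u * c \<ge> 0" using cpos by (simp add: dd_def)
    ultimately show ?thesis by (simp add: x0_def)
  qed
  have "sup_norm V x0 = 1"
    by (rule sup_norm_eqI[OF fin V01(1)]) (use bnd in \<open>auto simp: x0_def dd_def\<close>)
  with s0 have feas: "x0 \<in> feasible V" by (simp add: feasible_def)
  have g0: "gamma_x V E x0 = c"
  proof (rule gamma_x_eqI[where E=E and u=0 and v=1, OF fin V01(1) V01(2) E01])
    show "\<bar>x0 0 - x0 1\<bar> = c" using cpos n3 by (simp add: x0_def dd_def)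
    fix a b assume ab: "a \<in> V" "b \<in> V" "E a b"
    have "\<bar>dd a - dd b\<bar> \<le> 1" using ab cyc_dist_step[of a n b] by (simp add: V_def E_def dd_def)
    then have "\<bar>dd a - dd b\<bar> * c \<le> c" using cpos by (simp add: mult_le_cancel_right1)
    moreover have "x0 a - x0 b = - ((dd a - dd b) * c)" by (simp add: x0_def algebra_simps)
    ultimately show "\<bar>x0 a - x0 b\<bar> \<le> c" by (simp add: abs_mult cpos less_imp_le)
  qed
  have lb: "c \<le> gamma_x V E x" if x: "x \<in> feasible V" for x
  proof -
    obtain w y where w: "w \<in> V" "y w = 1" "sum y V = 0" and yx: "\<forall>u v. \<bar>y u - y v\<bar> = \<bar>x u - x v\<bar>"
      using normalize[OF fin ne x] by blast
    define g where "g = gamma_x V E x"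
    have wn: "w < n" using w by (simp add: V_def)
    have edge: "y a - g \<le> y b" if "a < n" "b < n" "E a b" for a b
    proof -
      have "\<bar>x a - x b\<bar> \<le> g" unfolding g_def by (rule gamma_x_ge[OF fin]) (use that in \<open>auto simp: V_def\<close>)
      then show ?thesis using yx by (metis abs_diff_le_iff diff_le_eq add.commute)
    qed
    have g0: "g \<ge> 0"
      using gamma_x_ge[where E=E and u=0 and v=1, OF fin V01 E01, of x] by (simp add: g_def)
    have fwd: "1 - real k * g \<le> y ((w + k) mod n)" for k
    proof (induction k)
      case 0 then show ?case using w wn by simp
    next
      case (Suc k)
      have "E ((w + k) mod n) ((w + Suc k) mod n)"
        by (simp add: E_def cycle_edge_def mod_Suc_eq)
      then have "y ((w + k) mod n) - g \<le> y ((w + Suc k) mod n)"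
        using n3 by (intro edge) auto
      then show ?case using Suc by (simp add: algebra_simps)
    qed
    have bwd: "k \<le> n \<Longrightarrow> 1 - real k * g \<le> y ((w + (n - k)) mod n)" for k
    proof (induction k)
      case 0 then show ?case using w wn by simp
    next
      case (Suc k)
      have eq: "w + (n - k) = Suc (w + (n - Suc k))" using Suc.prems by arith
      have "E ((w + (n - k)) mod n) ((w + (n - Suc k)) mod n)"
        unfolding eq by (simp add: E_def cycle_edge_def mod_Suc_eq)
      then have "y ((w + (n - k)) mod n) - g \<le> y ((w + (n - Suc k)) mod n)"
        using n3 by (intro edge) auto
      then show ?case using Suc by (simp add: algebra_simps)
    qed
    define dw :: "nat \<Rightarrow> real" where "dw = (\<lambda>u. real (min ((u + n - w) mod n) (n - (u + n - w) mod n)))"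
    have low: "1 - dw u * g \<le> y u" if u: "u \<in> V" for u
    proof -
      define k where "k = (u + n - w) mod n"
      have kn: "k < n" using n3 by (simp add: k_def)
      have uk: "(w + k) mod n = u" using mod_back[of u n w] u wn by (simp add: V_def k_def)
      have uk2: "(w + (n - (n - k))) mod n = u" using uk kn by simp
      have "1 - real k * g \<le> y u" using fwd[of k] uk by simp
      moreover have "1 - real (n - k) * g \<le> y u" using bwd[of "n - k"] uk2 by simp
      ultimately show ?thesis unfolding dw_def k_def[symmetric]
        by (cases "k \<le> n - k") (simp_all add: min_def)
    qed
    have "real (card V) \<le> g * (\<Sum>u\<in>V. dw u)" by (rule sum_bound[OF fin w(3) low])
    also have "(\<Sum>u\<in>V. dw u) = real S"
      unfolding V_def dw_def using reindex_sum[OF wn, of "\<lambda>k. real (min k (n - k))"] S_sum[of n]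
      by (simp add: S_def flip: of_nat_sum)
    finally have "real n \<le> g * real S" by (simp add: V_def)
    then show ?thesis using Spos by (simp add: g_def c_def field_simps)
  qed
  show ?thesis unfolding target V_def[symmetric] E_def[symmetric]
    by (rule gamma_eqI[OF feas g0 lb])
qed

theorem corollary3p3:
  shows "(\<forall>n::nat. n \<ge> 2 \<longrightarrow>
            gamma {0..<n} complete_edge = real n / (real n - 1))
       \<and> (\<forall>n::nat. n \<ge> 3 \<longrightarrow>
            gamma {0..<n} (cycle_edge n) = real n / (real (n div 2) * real ((n + 1) div 2)))"
  using complete_part cycle_part by blast

end
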